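(* Let $\mathbf F$ be an oriented edge-incidence matrix for an unweighted connected undirected graph $G=(V,\mathcal E)$ without self-loops. Then $\|\mathbf F^\dagger\|_{\max}\le1$.
   Context: For an unweighted graph the adjacency matrix $\boldsymbol\Phi$ has entries in $\{0,1\}$. An oriented edge-incidence matrix $\mathbf F\in\mathbb R^{n\times|\mathcal E|}$ has, for each edge between nodes $j$ and $k$, a column with entry $\sqrt{\Phi_{jk}}=1$ in row $j$, $-1$ in row $k$, and zeros elsewhere. $\mathbf F^\dagger$ is the Moore–Penrose pseudoinverse and $\|\cdot\|_{\max}$ the maximum absolute entry. *)

theory Defs
  imports "Jordan_Normal_Form.Matrix"
begin

text \<open>Oriented edge-incidence matrix: vertices are 0..<n, the edges are given as a list
  of oriented pairs (j,k); column c has +1 in row j and -1 in row k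
  (here sqrt(Phi_jk) = 1 since the graph is unweighted).\<close>
definition incidence_mat :: "nat \<Rightarrow> (nat \<times> nat) list \<Rightarrow> real mat" where
  "incidence_mat n es = mat n (length es)
     (\<lambda>(i, c). if i = fst (es ! c) then 1 else if i = snd (es ! c) then -1 else 0)"

definition is_orientation :: "nat \<Rightarrow> (nat \<Rightarrow> nat \<Rightarrow> bool) \<Rightarrow> (nat \<times> nat) list \<Rightarrow> bool" where
  "is_orientation n Adj es \<longleftrightarrow>
     distinct (map (\<lambda>(j, k). {j, k}) es) \<and>
     set (map (\<lambda>(j, k). {j, k}) es) = {{j, k} | j k. j < n \<and> k < n \<and> Adj j k}"

definition is_pinv :: "real mat \<Rightarrow> real mat \<Rightarrow> bool" where
  "is_pinv A X \<longleftrightarrow> X \<in> carrier_mat (dim_col A) (dim_row A) \<and>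
     A * X * A = A \<and> X * A * X = X \<and>
     transpose_mat (A * X) = A * X \<and> transpose_mat (X * A) = X * A"

definition pinv :: "real mat \<Rightarrow> real mat" where
  "pinv A = (THE X. is_pinv A X)"

definition max_abs_le :: "real mat \<Rightarrow> real \<Rightarrow> bool" where
  "max_abs_le A c \<longleftrightarrow> (\<forall>i < dim_row A. \<forall>j < dim_col A. \<bar>A $$ (i, j)\<bar> \<le> c)"

end

theory Submission imports Defs "Jordan_Normal_Form.Determinant" begin

lemma mult_entry:
  assumes "A \<in> carrier_mat r k" "B \<in> carrier_mat k c" "i < r" "j < c"
  shows "(A * B) $$ (i, j) = (\<Sum>l<k. A $$ (i, l) * B $$ (l, j))"
  using assms by (auto simp: scalar_prod_def lessThan_atLeast0 intro!: sum.cong)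

lemma pinv_unique:
  assumes X: "is_pinv A X" and Y: "is_pinv A Y"
  shows "X = Y"
proof -
  define r c where "r = dim_row A" "c = dim_col A"
  have A: "A \<in> carrier_mat r c" unfolding r_c_def by auto
  have Xc: "X \<in> carrier_mat c r" and Yc: "Y \<in> carrier_mat c r"
    using X Y unfolding is_pinv_def r_c_def by auto
  note XX = X[unfolded is_pinv_def] and YY = Y[unfolded is_pinv_def]
  have tA1: "transpose_mat A = transpose_mat A * (A * Y)"
  proof -
    have "transpose_mat A = transpose_mat (A * Y * A)" using YY by simp
    also have "\<dots> = transpose_mat A * transpose_mat (A * Y)"
      using transpose_mult[of "A * Y" r r A c] A Yc by auto
    also have "\<dots> = transpose_mat A * (A * Y)" using YY by simp
    finally show ?thesis .
  qed
  have tA2: "transpose_mat A = (X * A) * transpose_mat A"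
  proof -
    have "transpose_mat A = transpose_mat (A * X * A)" using XX by simp
    also have "\<dots> = transpose_mat (A * (X * A))" using A Xc by simp
    also have "\<dots> = transpose_mat (X * A) * transpose_mat A"
      using transpose_mult[of A r c "X * A" c] A Xc by auto
    also have "\<dots> = (X * A) * transpose_mat A" using XX by simp
    finally show ?thesis .
  qed
  have "X = X * (A * X)" using XX A Xc by simp
  also have "\<dots> = X * transpose_mat (A * X)" using XX by simp
  also have "\<dots> = X * (transpose_mat X * transpose_mat A)"
    using transpose_mult[of A r c X r] A Xc by auto
  also have "\<dots> = X * (transpose_mat X * (transpose_mat A * (A * Y)))"
    using tA1 by simp
  also have "\<dots> = X * ((transpose_mat X * transpose_mat A) * (A * Y))"
    using A Xc Yc by (subst assoc_mult_mat[of "transpose_mat X" r c "transpose_mat A" r "A * Y" r]) auto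
  also have "\<dots> = X * (transpose_mat (A * X) * (A * Y))"
    using transpose_mult[of A r c X r] A Xc by auto
  also have "\<dots> = X * ((A * X) * (A * Y))" using XX by simp
  also have "\<dots> = (X * (A * X)) * (A * Y)"
    using assoc_mult_mat[of X c r "A*X" r "A*Y" r] A Xc Yc by (auto simp: mult_carrier_mat)
  also have "\<dots> = X * (A * Y)"
    using XX assoc_mult_mat[of X c r A c X r] A Xc Yc by (auto simp: mult_carrier_mat)
  also have "\<dots> = X * A * Y" using assoc_mult_mat[of X c r A c Y r] A Xc Yc by auto
  finally have 1: "X = X * A * Y" .
  have "Y = (Y * A) * Y" using YY by simp
  also have "\<dots> = transpose_mat (Y * A) * Y" using YY by simp
  also have "\<dots> = (transpose_mat A * transpose_mat Y) * Y"
    using transpose_mult[of Y c r A c] A Yc by auto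
  also have "\<dots> = ((X * A) * transpose_mat A * transpose_mat Y) * Y"
    using tA2 by simp
  also have "\<dots> = (X * A) * (transpose_mat A * transpose_mat Y) * Y"
    using A Xc Yc by (subst assoc_mult_mat[of "X * A" c c "transpose_mat A" r "transpose_mat Y" c]) auto
  also have "\<dots> = (X * A) * transpose_mat (Y * A) * Y"
    using transpose_mult[of Y c r A c] A Yc by auto
  also have "\<dots> = (X * A) * (Y * A) * Y" using YY by simp
  also have "\<dots> = (X * A) * ((Y * A) * Y)"
    using assoc_mult_mat[of "X*A" c c "Y*A" c Y r] A Xc Yc by (auto simp: mult_carrier_mat)
  also have "\<dots> = X * A * Y" using YY by simp
  finally have 2: "Y = X * A * Y" .
  from 1 2 show ?thesis by simp
qed

locale inc =
  fixes n :: nat and es :: "(nat \<times> nat) list"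
  assumes valid: "\<And>e. e \<in> set es \<Longrightarrow> fst e < n \<and> snd e < n \<and> fst e \<noteq> snd e"
    and conn: "\<And>(x :: nat \<Rightarrow> real) j k. (\<forall>e\<in>set es. x (fst e) = x (snd e)) \<Longrightarrow> j < n \<Longrightarrow> k < n \<Longrightarrow> x j = x k"
    and npos: "0 < n"
begin

abbreviation "F \<equiv> incidence_mat n es"
abbreviation "m \<equiv> length es"
definition "a e = fst (es ! e)"
definition "b e = snd (es ! e)"

lemma F_carrier: "F \<in> carrier_mat n m"
  by (simp add: incidence_mat_def)

lemma F_entry: "u < n \<Longrightarrow> e < m \<Longrightarrow> F $$ (u, e) = (if u = a e then 1 else if u = b e then -1 else 0)"
  by (simp add: incidence_mat_def a_def b_def)

lemma ab: "e < m \<Longrightarrow> a e < n \<and> b e < n \<and> a e \<noteq> b e"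
  using valid[of "es ! e"] by (simp add: a_def b_def)

lemma col_sum:
  assumes e: "e < m"
  shows "(\<Sum>u<n. F $$ (u, e) * h u) = h (a e) - h (b e)"
proof -
  have "(\<Sum>u<n. F $$ (u, e) * h u) = (\<Sum>u<n. (if u = a e then h u else 0) - (if u = b e then h u else 0))"
    by (rule sum.cong) (use ab[OF e] in \<open>auto simp: F_entry e\<close>)
  also have "\<dots> = h (a e) - h (b e)"
    using ab[OF e] by (simp add: sum_subtractf)
  finally show ?thesis .
qed

lemma col_sum_S:
  assumes e: "e < m" and S: "S \<subseteq> {..<n}"
  shows "(\<Sum>u\<in>S. F $$ (u, e)) = (if a e \<in> S then 1 else 0) - (if b e \<in> S then 1 else 0)"
proof -
  have fin: "finite S" using S finite_subset by blast
  have "(\<Sum>u\<in>S. F $$ (u, e)) = (\<Sum>u\<in>S. (if u = a e then 1 else 0) - (if u = b e then 1 else 0))"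
    by (rule sum.cong) (use ab[OF e] S in \<open>auto simp: F_entry e\<close>)
  also have "\<dots> = (if a e \<in> S then 1 else 0) - (if b e \<in> S then 1 else 0)"
    using ab[OF e] fin by (simp add: sum_subtractf)
  finally show ?thesis .
qed

abbreviation "Ft \<equiv> transpose_mat F"
abbreviation "L \<equiv> F * Ft"
abbreviation "J \<equiv> mat n n (\<lambda>_. 1 :: real)"
abbreviation "c \<equiv> 1 / real n"
abbreviation "K \<equiv> L + c \<cdot>\<^sub>m J"

lemma Ft_carrier: "Ft \<in> carrier_mat m n" using F_carrier by auto
lemma L_carrier: "L \<in> carrier_mat n n" using F_carrier by auto
lemma K_carrier: "K \<in> carrier_mat n n" using F_carrier by auto

lemma L_entry: "i < n \<Longrightarrow> j < n \<Longrightarrow> L $$ (i, j) = (\<Sum>e<m. F $$ (i, e) * F $$ (j, e))"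
  using F_carrier by (subst mult_entry[OF F_carrier Ft_carrier]) auto

lemma K_entry: "i < n \<Longrightarrow> j < n \<Longrightarrow> K $$ (i, j) = L $$ (i, j) + c"
  using F_carrier by auto

lemma L_mult: assumes i: "i < n"
  shows "(\<Sum>j<n. L $$ (i, j) * x j) = (\<Sum>e<m. F $$ (i, e) * (x (a e) - x (b e)))"
proof -
  have "(\<Sum>j<n. L $$ (i, j) * x j) = (\<Sum>j<n. \<Sum>e<m. F $$ (i, e) * (F $$ (j, e) * x j))"
    using i by (simp add: L_entry sum_distrib_right mult.assoc)
  also have "\<dots> = (\<Sum>e<m. \<Sum>j<n. F $$ (i, e) * (F $$ (j, e) * x j))"
    by (rule sum.swap)
  also have "\<dots> = (\<Sum>e<m. F $$ (i, e) * (x (a e) - x (b e)))"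
    by (rule sum.cong, simp, simp add: sum_distrib_left[symmetric] col_sum)
  finally show ?thesis .
qed

lemma F_colsum0: "e < m \<Longrightarrow> (\<Sum>u<n. F $$ (u, e)) = 0"
  using col_sum[of e "\<lambda>_. 1"] by simp

lemma K_rowsum: assumes i: "i < n" shows "(\<Sum>j<n. K $$ (i, j)) = 1"
proof -
  have "(\<Sum>j<n. K $$ (i, j)) = (\<Sum>j<n. L $$ (i, j) * 1) + real n * c"
    using i by (simp add: K_entry sum.distrib)
  also have "(\<Sum>j<n. L $$ (i, j) * 1) = 0"
    using i by (simp add: L_mult[of i "\<lambda>_. 1", simplified])
  finally show ?thesis using npos by simp
qed


lemma K_kernel:
  assumes xc: "x \<in> carrier_vec n" and Kx: "K *\<^sub>v x = 0\<^sub>v n"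
  shows "x = 0\<^sub>v n"
proof -
  define xf where "xf i = x $ i" for i
  define y where "y e = xf (a e) - xf (b e)" for e
  define s where "s = (\<Sum>j<n. xf j)"
  have Kxi: "(\<Sum>e<m. F $$ (i, e) * y e) + c * s = 0" if i: "i < n" for i
  proof -
    have "0 = (K *\<^sub>v x) $ i" using Kx i by simp
    also have "\<dots> = (\<Sum>j<n. K $$ (i, j) * xf j)"
      using i xc K_carrier by (auto simp: scalar_prod_def lessThan_atLeast0 xf_def intro!: sum.cong)
    also have "\<dots> = (\<Sum>j<n. L $$ (i, j) * xf j) + c * s"
      using i by (simp add: K_entry distrib_right sum.distrib s_def sum_distrib_left)
    also have "\<dots> = (\<Sum>e<m. F $$ (i, e) * y e) + c * s"
      using i by (simp add: L_mult y_def)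
    finally show ?thesis by simp
  qed
  have "0 = (\<Sum>i<n. (\<Sum>e<m. F $$ (i, e) * y e) + c * s)" using Kxi by simp
  also have "\<dots> = (\<Sum>i<n. \<Sum>e<m. F $$ (i, e) * y e) + real n * (c * s)"
    by (simp add: sum.distrib)
  also have "(\<Sum>i<n. \<Sum>e<m. F $$ (i, e) * y e) = (\<Sum>e<m. \<Sum>i<n. F $$ (i, e) * y e)"
    by (rule sum.swap)
  also have "\<dots> = 0"
    by (simp add: sum_distrib_right[symmetric] F_colsum0)
  finally have s0: "s = 0" using npos by simp
  have Li: "(\<Sum>e<m. F $$ (i, e) * y e) = 0" if "i < n" for i using Kxi[OF that] s0 by simp
  have "0 = (\<Sum>i<n. xf i * (\<Sum>e<m. F $$ (i, e) * y e))" using Li by simp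
  also have "\<dots> = (\<Sum>i<n. \<Sum>e<m. F $$ (i, e) * xf i * y e)"
    by (simp add: sum_distrib_left mult_ac)
  also have "\<dots> = (\<Sum>e<m. \<Sum>i<n. F $$ (i, e) * xf i * y e)"
    by (rule sum.swap)
  also have "\<dots> = (\<Sum>e<m. y e * y e)"
    by (rule sum.cong, simp, simp add: sum_distrib_right[symmetric] col_sum y_def)
  finally have "(\<Sum>e<m. y e * y e) = 0" by simp
  hence y0: "\<forall>e<m. y e = 0"
    by (subst (asm) sum_nonneg_eq_0_iff) auto
  have eq: "\<forall>e\<in>set es. xf (fst e) = xf (snd e)"
  proof
    fix e assume "e \<in> set es"
    then obtain k where k: "k < m" "es ! k = e" by (auto simp: in_set_conv_nth)
    with y0 show "xf (fst e) = xf (snd e)" by (auto simp: y_def a_def b_def)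
  qed
  have const: "xf j = xf 0" if "j < n" for j using conn[OF eq that npos] .
  have "s = (\<Sum>j<n. xf 0)" unfolding s_def by (rule sum.cong[OF refl const]) simp
  hence "s = real n * xf 0" by simp
  with s0 npos have x0: "xf 0 = 0" by simp
  show ?thesis
  proof (rule eq_vecI)
    fix i assume "i < dim_vec (0\<^sub>v n :: real vec)"
    hence "i < n" by simp
    from const[OF this] x0 have "xf i = 0" by simp
    thus "x $ i = 0\<^sub>v n $ i" using \<open>i < n\<close> by (simp add: xf_def)
  qed (use xc in simp)
qed

lemma detK: "det K \<noteq> 0"
  using K_kernel det_0_iff_vec_prod_zero_field[OF K_carrier] by blast

lemma M_exists: "\<exists>M. M \<in> carrier_mat n n \<and> K * M = 1\<^sub>m n \<and> M * K = 1\<^sub>m n"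
proof -
  have "K \<in> Units (ring_mat TYPE(real) n ())"
    by (rule det_non_zero_imp_unit[OF K_carrier detK])
  thus ?thesis by (auto simp: Units_def ring_mat_def)
qed


lemma main_inc: "\<exists>X. is_pinv F X \<and> max_abs_le X 1"
proof -
  obtain M where Mc: "M \<in> carrier_mat n n" and KM: "K * M = 1\<^sub>m n" and MK: "M * K = 1\<^sub>m n"
    using M_exists by blast
  have Ksym: "transpose_mat K = K"
  proof (rule eq_matI)
    fix i j assume "i < dim_row K" "j < dim_col K"
    hence ij: "i < n" "j < n" using K_carrier by auto
    have "K $$ (j, i) = K $$ (i, j)"
      using ij by (simp only: K_entry L_entry mult.commute)
    thus "transpose_mat K $$ (i, j) = K $$ (i, j)" using ij K_carrier by simp
  qed (use K_carrier in auto)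
  have Msym: "transpose_mat M = M"
  proof -
    have "transpose_mat M * K = 1\<^sub>m n"
    proof -
      have "transpose_mat M * K = transpose_mat M * transpose_mat K" using Ksym by simp
      also have "\<dots> = transpose_mat (K * M)" using transpose_mult[OF K_carrier Mc] by simp
      finally show ?thesis using KM by simp
    qed
    hence "transpose_mat M = (transpose_mat M * K) * M" using Mc KM K_carrier
      by (subst assoc_mult_mat[of _ n n _ n _ n]) auto
    thus ?thesis using \<open>transpose_mat M * K = 1\<^sub>m n\<close> Mc by simp
  qed
  have Msym_e: "M $$ (i, j) = M $$ (j, i)" if "i < n" "j < n" for i j
    using arg_cong[OF Msym, of "\<lambda>A. A $$ (i, j)"] that Mc by simp
  have KJ: "K * J = J"
  proof (rule eq_matI)
    fix i j assume "i < dim_row J" "j < dim_col J"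
    hence ij: "i < n" "j < n" by auto
    have "(K * J) $$ (i, j) = (\<Sum>k<n. K $$ (i, k) * J $$ (k, j))"
      by (rule mult_entry[OF K_carrier _ ij]) simp
    also have "\<dots> = (\<Sum>k<n. K $$ (i, k))" by (rule sum.cong) (use ij in auto)
    finally show "(K * J) $$ (i, j) = J $$ (i, j)" using K_rowsum[OF ij(1)] ij by simp
  qed (use K_carrier in auto)
  have MJ: "M * J = J"
  proof -
    have "M * J = M * (K * J)" using KJ by simp
    also have "\<dots> = (M * K) * J" using Mc K_carrier
      by (subst assoc_mult_mat[of M n n K n J n]) auto
    finally show ?thesis using MK by simp
  qed
  have Mrow: "(\<Sum>k<n. M $$ (i, k)) = 1" if i: "i < n" for i
  proof -
    have "(M * J) $$ (i, 0) = (\<Sum>k<n. M $$ (i, k) * J $$ (k, 0))"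
      by (rule mult_entry[OF Mc _ i npos]) simp
    also have "\<dots> = (\<Sum>k<n. M $$ (i, k))" by (rule sum.cong) (use npos in auto)
    finally show ?thesis using MJ i npos by simp
  qed
  have Mcol: "(\<Sum>k<n. M $$ (k, j)) = 1" if j: "j < n" for j
    using Mrow[OF j] j by (simp add: Msym_e)
  define X where "X = Ft * M"
  have Xc: "X \<in> carrier_mat m n" unfolding X_def using Ft_carrier Mc by auto
  have X_entry: "X $$ (e, v) = M $$ (a e, v) - M $$ (b e, v)" if "e < m" "v < n" for e v
  proof -
    have "X $$ (e, v) = (\<Sum>u<n. Ft $$ (e, u) * M $$ (u, v))"
      unfolding X_def using that by (simp add: mult_entry[OF Ft_carrier Mc])
    also have "\<dots> = (\<Sum>u<n. F $$ (u, e) * M $$ (u, v))"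
      by (rule sum.cong) (use that F_carrier in auto)
    finally show ?thesis using col_sum[OF that(1)] by simp
  qed
  define Pi where "Pi = mat n n (\<lambda>(i, j). (if i = j then 1 else 0) - c)"
  have Pic: "Pi \<in> carrier_mat n n" unfolding Pi_def by simp
  have FX: "F * X = Pi"
  proof (rule eq_matI)
    fix i j assume "i < dim_row Pi" "j < dim_col Pi"
    hence ij: "i < n" "j < n" unfolding Pi_def by auto
    have "F * X = L * M" unfolding X_def using F_carrier Mc by simp
    hence "(F * X) $$ (i, j) = (\<Sum>k<n. L $$ (i, k) * M $$ (k, j))"
      using ij by (simp add: mult_entry[OF L_carrier Mc])
    also have "\<dots> = (\<Sum>k<n. K $$ (i, k) * M $$ (k, j)) - c * (\<Sum>k<n. M $$ (k, j))"
      using ij by (simp add: K_entry algebra_simps sum_subtractf sum.distrib sum_distrib_left)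
    also have "(\<Sum>k<n. K $$ (i, k) * M $$ (k, j)) = (K * M) $$ (i, j)"
      using ij by (simp add: mult_entry[OF K_carrier Mc])
    finally show "(F * X) $$ (i, j) = Pi $$ (i, j)"
      using ij KM Mcol[OF ij(2)] by (simp add: Pi_def)
  qed (use F_carrier Xc Pi_def in auto)
  have FXF: "F * X * F = F"
  proof (rule eq_matI)
    fix i e assume "i < dim_row F" "e < dim_col F"
    hence ie: "i < n" "e < m" using F_carrier by auto
    have "(F * X * F) $$ (i, e) = (\<Sum>k<n. Pi $$ (i, k) * F $$ (k, e))"
      using ie FX by (simp add: mult_entry[OF Pic F_carrier])
    also have "\<dots> = (\<Sum>k<n. F $$ (k, e) * ((if i = k then 1 else 0) - c))"
      by (rule sum.cong) (use ie in \<open>auto simp: Pi_def\<close>)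
    also have "\<dots> = F $$ (i, e)"
      by (subst col_sum[OF ie(2)]) (use ie ab[OF ie(2)] in \<open>auto simp: F_entry\<close>)
    finally show "(F * X * F) $$ (i, e) = F $$ (i, e)" .
  qed (use F_carrier Xc in auto)
  have XFX: "X * F * X = X"
  proof (rule eq_matI)
    fix e j assume "e < dim_row X" "j < dim_col X"
    hence ej: "e < m" "j < n" using Xc by auto
    have "X * F * X = X * (F * X)" using Xc F_carrier by simp
    hence "(X * F * X) $$ (e, j) = (\<Sum>k<n. X $$ (e, k) * Pi $$ (k, j))"
      using ej FX by (simp add: mult_entry[OF Xc Pic])
    also have "\<dots> = (\<Sum>k<n. (if k = j then X $$ (e, k) else 0)) - c * (\<Sum>k<n. X $$ (e, k))"
    proof -
      have "(\<Sum>k<n. X $$ (e, k) * Pi $$ (k, j)) = (\<Sum>k<n. (if k = j then X $$ (e, k) else 0) - c * X $$ (e, k))"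
        by (rule sum.cong) (use ej in \<open>auto simp: Pi_def algebra_simps\<close>)
      thus ?thesis by (simp add: sum_subtractf sum_distrib_left)
    qed
    also have "(\<Sum>k<n. X $$ (e, k)) = (\<Sum>k<n. M $$ (a e, k)) - (\<Sum>k<n. M $$ (b e, k))"
      using ej by (simp add: X_entry sum_subtractf)
    also have "\<dots> = 0" using Mrow ab[OF ej(1)] by simp
    finally show "(X * F * X) $$ (e, j) = X $$ (e, j)" using ej by simp
  qed (use F_carrier Xc in auto)
  have sym1: "transpose_mat (F * X) = F * X"
    unfolding FX by (rule eq_matI) (auto simp: Pi_def)
  have XF_entry: "(X * F) $$ (e, f) = M $$ (a e, a f) - M $$ (b e, a f) - M $$ (a e, b f) + M $$ (b e, b f)"
    if "e < m" "f < m" for e f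
  proof -
    have "(X * F) $$ (e, f) = (\<Sum>u<n. F $$ (u, f) * X $$ (e, u))"
      using that by (simp add: mult_entry[OF Xc F_carrier] mult.commute)
    also have "\<dots> = X $$ (e, a f) - X $$ (e, b f)" by (rule col_sum[OF that(2)])
    finally show ?thesis using that ab[OF that(1)] ab[OF that(2)] by (simp add: X_entry)
  qed
  have sym2: "transpose_mat (X * F) = X * F"
  proof (rule eq_matI)
    fix e f assume "e < dim_row (X * F)" "f < dim_col (X * F)"
    hence ef: "e < m" "f < m" using Xc F_carrier by auto
    show "transpose_mat (X * F) $$ (e, f) = (X * F) $$ (e, f)"
      using ef XF_entry ab[OF ef(1)] ab[OF ef(2)] Xc F_carrier by (simp add: Msym_e)
  qed (use Xc F_carrier in auto)
  have pinv: "is_pinv F X"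
    unfolding is_pinv_def using Xc F_carrier FXF XFX sym1 sym2 by auto
  have bound: "\<bar>X $$ (e, v)\<bar> \<le> 1" if ev: "e < m" "v < n" for e v
  proof -
    define phi where "phi u = M $$ (u, v)" for u
    define t where "t = max (phi (a e)) (phi (b e))"
    define S where "S = {u. u < n \<and> t \<le> phi u}"
    have Ssub: "S \<subseteq> {..<n}" unfolding S_def by auto
    have fin: "finite S" using Ssub finite_subset by blast
    define g where "g f = X $$ (f, v) * ((if a f \<in> S then 1 else 0) - (if b f \<in> S then 1 else 0))" for f
    have Xphi: "X $$ (f, v) = phi (a f) - phi (b f)" if "f < m" for f
      using X_entry[OF that ev(2)] by (simp add: phi_def)
    have gnn: "g f \<ge> 0" if "f < m" for f
      using Xphi[OF that] ab[OF that] by (auto simp: g_def S_def)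
    have ge: "g e = \<bar>X $$ (e, v)\<bar>"
      using Xphi[OF ev(1)] ab[OF ev(1)] by (auto simp: g_def S_def t_def)
    have FXi: "(\<Sum>f<m. F $$ (i, f) * X $$ (f, v)) = (if i = v then 1 else 0) - c" if "i < n" for i
      using arg_cong[OF FX, of "\<lambda>A. A $$ (i, v)"] that ev
      by (simp add: mult_entry[OF F_carrier Xc] Pi_def)
    have "(\<Sum>f<m. g f) = (\<Sum>f<m. X $$ (f, v) * (\<Sum>i\<in>S. F $$ (i, f)))"
      by (rule sum.cong) (auto simp: g_def col_sum_S[OF _ Ssub])
    also have "\<dots> = (\<Sum>i\<in>S. \<Sum>f<m. F $$ (i, f) * X $$ (f, v))"
      by (simp add: sum_distrib_left mult.commute sum.swap[of _ S])
    also have "\<dots> = (\<Sum>i\<in>S. (if i = v then 1 else 0) - c)"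
      by (rule sum.cong) (use Ssub FXi in auto)
    also have "\<dots> = (if v \<in> S then 1 else 0) - real (card S) * c"
      using fin by (simp add: sum_subtractf)
    also have "\<dots> \<le> 1"
    proof -
      have "0 \<le> real (card S) * c" by simp
      moreover have "(if v \<in> S then 1 else 0) \<le> (1::real)" by simp
      ultimately show ?thesis by linarith
    qed
    finally have sumle: "(\<Sum>f<m. g f) \<le> 1" .
    have "g e \<le> (\<Sum>f<m. g f)"
      by (rule member_le_sum) (use ev gnn in auto)
    thus ?thesis using ge sumle by simp
  qed
  have "max_abs_le X 1" unfolding max_abs_le_def using Xc bound by auto
  with pinv show ?thesis by blast
qed

end


theorem lemmaA4:
  fixes n :: nat and Adj :: "nat \<Rightarrow> nat \<Rightarrow> bool" and es :: "(nat \<times> nat) list"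
  assumes sym: "\<And>j k. Adj j k \<Longrightarrow> Adj k j"
    and no_loops: "\<And>j. \<not> Adj j j"
    and connected: "\<And>j k. j < n \<Longrightarrow> k < n \<Longrightarrow>
        (\<lambda>a b. a < n \<and> b < n \<and> Adj a b)\<^sup>*\<^sup>* j k"
    and orient: "is_orientation n Adj es"
  shows "max_abs_le (pinv (incidence_mat n es)) 1"
proof -
  let ?E = "{{j, k} | j k. j < n \<and> k < n \<and> Adj j k}"
  have setE: "set (map (\<lambda>(j, k). {j, k}) es) = ?E" using orient by (simp add: is_orientation_def)
  have inE: "{fst e, snd e} \<in> ?E" if "e \<in> set es" for e
  proof -
    have "(\<lambda>(j, k). {j, k}) e \<in> set (map (\<lambda>(j, k). {j, k}) es)" using that by auto
    thus ?thesis unfolding setE by (cases e) simp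
  qed
  have valid: "fst e < n \<and> snd e < n \<and> fst e \<noteq> snd e" if "e \<in> set es" for e
  proof -
    from inE[OF that] obtain j k where jk: "{fst e, snd e} = {j, k}" "j < n" "k < n" "Adj j k" by blast
    have "j \<noteq> k" using jk(4) no_loops by auto
    thus ?thesis using jk by (auto simp: doubleton_eq_iff)
  qed
  obtain X where X: "is_pinv (incidence_mat n es) X" and Xb: "max_abs_le X 1"
  proof (cases "n = 0")
    case True
    have "?E = {}" using True by auto
    hence "set (map (\<lambda>(j, k). {j, k}) es) = {}" using setE by simp
    hence es0: "es = []" by simp
    let ?F = "incidence_mat n es"
    have Fc: "?F \<in> carrier_mat 0 0" using True es0 by (simp add: incidence_mat_def)
    have all: "A = B" if "A \<in> carrier_mat 0 0" "B \<in> carrier_mat 0 0" for A B :: "real mat"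
      by (rule eq_matI) (use that in auto)
    have "is_pinv ?F ?F" unfolding is_pinv_def
      by (intro conjI all) (use Fc in auto)
    moreover have "max_abs_le ?F 1" using Fc by (simp add: max_abs_le_def)
    ultimately show ?thesis using that by blast
  next
    case False
    have conn: "x j = x k" if eq: "\<forall>e\<in>set es. x (fst e) = x (snd e)" and jk: "j < n" "k < n"
      for x :: "nat \<Rightarrow> real" and j k
    proof -
      have "(\<lambda>a b. a < n \<and> b < n \<and> Adj a b)\<^sup>*\<^sup>* j k" using connected[OF jk] .
      thus ?thesis
      proof (induction rule: rtranclp_induct)
        case base then show ?case by simp
      next
        case (step y z)
        then have "{y, z} \<in> ?E" by blast
        then obtain e where e: "e \<in> set es" "{fst e, snd e} = {y, z}"
          unfolding setE[symmetric] by auto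
        have "x y = x z" using eq e(1) e(2) by (auto simp: doubleton_eq_iff)
        with step show ?case by simp
      qed
    qed
    interpret inc n es
      by unfold_locales (use valid conn False in auto)
    from main_inc that show ?thesis by blast
  qed
  have "pinv (incidence_mat n es) = X"
    unfolding pinv_def
  proof (rule the_equality)
    show "is_pinv (incidence_mat n es) X" by (rule X)
    fix Y assume "is_pinv (incidence_mat n es) Y"
    thus "Y = X" using pinv_unique X by blast
  qed
  with Xb show ?thesis by simp
qed

end
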